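(* Let $S$ be a numerical semigroup with minimal generating set $P$ and let $G=G(S)=(V,E)$. Then every vertex of $G$ of maximal degree belongs to $P$. Moreover, for every $r\ge1$, the set of vertices of $G$ of degree $r$ is an antichain under divisibility, i.e. there are no two distinct vertices $v_1,v_2$ of degree $r$ with $v_2-v_1\in S$.
   Context: A numerical semigroup is a subset $S\subseteq\mathbb N$ containing $0$, closed under addition, with finite complement; $S^*=S\setminus\{0\}$, $m=\min S^*$, $P=S^*\setminus(S^*+S^* )$. $X=\{s\in S^*: s-m\notin S\}$. The graph $G(S)$ has edge set all subsets $\{x,y\}\subseteq X$ ($x=y$ allowed) with $x+y\in X$, and vertex set $V$ the endvertices of these edges. $N_G(x)=\{y\in X: x+y\in X\}$ and $\deg(x)=|N_G(x)|$. *)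

theory Defs
  imports Main
begin

definition numerical_semigroup :: "nat set \<Rightarrow> bool" where
  "numerical_semigroup S \<longleftrightarrow> 0 \<in> S \<and> (\<forall>x\<in>S. \<forall>y\<in>S. x + y \<in> S) \<and> finite (UNIV - S)"

definition nz :: "nat set \<Rightarrow> nat set" where
  "nz S = S - {0}"

definition mult :: "nat set \<Rightarrow> nat" where
  "mult S = (LEAST x. x \<in> nz S)"

definition mingens :: "nat set \<Rightarrow> nat set" where
  "mingens S = nz S - {a + b | a b. a \<in> nz S \<and> b \<in> nz S}"

definition Xset :: "nat set \<Rightarrow> nat set" where
  "Xset S = {s \<in> nz S. s - mult S \<notin> S}"

definition gedges :: "nat set \<Rightarrow> nat set set" where
  "gedges S = {{x, y} | x y. x \<in> Xset S \<and> y \<in> Xset S \<and> x + y \<in> Xset S}"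

definition gverts :: "nat set \<Rightarrow> nat set" where
  "gverts S = \<Union> (gedges S)"

definition gnbrs :: "nat set \<Rightarrow> nat \<Rightarrow> nat set" where
  "gnbrs S x = {y \<in> Xset S. x + y \<in> Xset S}"

definition gdeg :: "nat set \<Rightarrow> nat \<Rightarrow> nat" where
  "gdeg S x = card (gnbrs S x)"

end

theory Submission
  imports Defs
begin

lemma ns_add: "numerical_semigroup S \<Longrightarrow> x \<in> S \<Longrightarrow> y \<in> S \<Longrightarrow> x + y \<in> S"
  by (simp add: numerical_semigroup_def)

lemma X_sub: "Xset S \<subseteq> nz S" by (auto simp: Xset_def)

lemma mult_le: "a \<in> nz S \<Longrightarrow> mult S \<le> a"
  unfolding mult_def by (rule Least_le)

lemma ap_split:
  assumes ns: "numerical_semigroup S" and w: "w \<in> Xset S" and a: "a \<in> S" and b: "b \<in> S"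
    and e: "w = a + b" and a0: "a \<noteq> 0"
  shows "a \<in> Xset S"
proof -
  have an: "a \<in> nz S" using a a0 by (simp add: nz_def)
  have "a - mult S \<notin> S"
  proof
    assume h: "a - mult S \<in> S"
    have "mult S \<le> a" using an by (rule mult_le)
    hence "w - mult S = (a - mult S) + b" using e by simp
    hence "w - mult S \<in> S" using ns_add[OF ns h b] by simp
    thus False using w by (simp add: Xset_def)
  qed
  thus ?thesis using an by (simp add: Xset_def)
qed

lemma X_fin:
  assumes ns: "numerical_semigroup S"
  shows "finite (Xset S)"
proof -
  have "finite (UNIV - S)" using ns by (simp add: numerical_semigroup_def)
  then obtain B where B: "\<forall>n\<in>UNIV - S. n < B" using finite_nat_set_iff_bounded by blast
  have "Xset S \<subseteq> {..< B + mult S}"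
  proof
    fix s assume "s \<in> Xset S"
    hence "s - mult S \<notin> S" by (simp add: Xset_def)
    hence "s - mult S < B" using B by blast
    thus "s \<in> {..< B + mult S}" by simp
  qed
  thus ?thesis using finite_subset by blast
qed

lemma nb_fin: "numerical_semigroup S \<Longrightarrow> finite (gnbrs S x)"
  using X_fin[of S] unfolding gnbrs_def by auto

lemma nb_sub:
  assumes ns: "numerical_semigroup S" and v1: "v1 \<in> Xset S" and v2: "v2 \<in> Xset S"
    and le: "v1 \<le> v2" and d: "v2 - v1 \<in> S"
  shows "gnbrs S v2 \<subseteq> gnbrs S v1"
proof
  fix y assume "y \<in> gnbrs S v2"
  hence y: "y \<in> Xset S" and vy: "v2 + y \<in> Xset S" by (auto simp: gnbrs_def)
  have v1S: "v1 \<in> S" "v1 \<noteq> 0" using v1 by (auto simp: Xset_def nz_def)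
  have yS: "y \<in> S" using y by (auto simp: Xset_def nz_def)
  have "v1 + y \<in> Xset S"
    by (rule ap_split[OF ns vy ns_add[OF ns v1S(1) yS] d]) (use le v1S in auto)
  thus "y \<in> gnbrs S v1" using y by (simp add: gnbrs_def)
qed

lemma deg_strict:
  assumes ns: "numerical_semigroup S" and v1: "v1 \<in> Xset S" and v2: "v2 \<in> Xset S"
    and le: "v1 \<le> v2" and d: "v2 - v1 \<in> S" and ne: "v1 \<noteq> v2"
  shows "gdeg S v2 < gdeg S v1"
proof -
  define e where "e = v2 - v1"
  have sub: "gnbrs S v2 \<subseteq> gnbrs S v1" using nb_sub[OF ns v1 v2 le d] .
  have v1S: "v1 \<in> S" "v1 \<noteq> 0" using v1 by (auto simp: Xset_def nz_def)
  have eX: "e \<in> Xset S"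
    by (rule ap_split[OF ns v2 d[folded e_def] v1S(1)]) (use le ne e_def in auto)
  have eS: "e \<in> S" using d e_def by simp
  have fin1: "finite (gnbrs S v1)" using nb_fin[OF ns] .
  show ?thesis
  proof (cases "gnbrs S v2 = {}")
    case True
    have "e \<in> gnbrs S v1" using eX v2 le unfolding gnbrs_def e_def by auto
    hence "card (gnbrs S v1) > 0" using fin1 card_gt_0_iff by blast
    thus ?thesis using True by (simp add: gdeg_def)
  next
    case False
    define y where "y = Max (gnbrs S v2)"
    have yin: "y \<in> gnbrs S v2" using False nb_fin[OF ns] y_def by simp
    hence y: "y \<in> Xset S" and vy: "v2 + y \<in> Xset S" by (auto simp: gnbrs_def)
    have yS: "y \<in> S" using y by (auto simp: Xset_def nz_def)
    have ye: "y + e \<in> Xset S"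
      by (rule ap_split[OF ns vy ns_add[OF ns yS eS] v1S(1)]) (use le e_def ne in auto)
    have "v1 + (y + e) = v2 + y" using le e_def by simp
    hence in1: "y + e \<in> gnbrs S v1" using ye vy unfolding gnbrs_def by (metis (mono_tags, lifting) mem_Collect_eq)
    have "e > 0" using le ne e_def by simp
    hence "y + e \<notin> gnbrs S v2" using Max_ge[OF nb_fin[OF ns], of "y + e" v2] y_def by auto
    hence "gnbrs S v2 \<subset> gnbrs S v1" using sub in1 by blast
    thus ?thesis using psubset_card_mono[OF fin1] by (simp add: gdeg_def)
  qed
qed

lemma gverts_X: "gverts S \<subseteq> Xset S"
  unfolding gverts_def gedges_def by auto

theorem corollary4p8:
  fixes S :: "nat set"
  assumes "numerical_semigroup S"
  shows "(\<forall>v \<in> gverts S. (\<forall>w \<in> gverts S. gdeg S w \<le> gdeg S v) \<longrightarrow> v \<in> mingens S)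
       \<and> (\<forall>r \<ge> 1. \<forall>v1 \<in> gverts S. \<forall>v2 \<in> gverts S.
            gdeg S v1 = r \<and> gdeg S v2 = r \<and> v1 \<noteq> v2 \<longrightarrow> \<not> (v1 \<le> v2 \<and> v2 - v1 \<in> S))"
proof (intro conjI ballI impI allI)
  fix v assume v: "v \<in> gverts S" and mx: "\<forall>w \<in> gverts S. gdeg S w \<le> gdeg S v"
  show "v \<in> mingens S"
  proof (rule ccontr)
    assume "v \<notin> mingens S"
    have vX: "v \<in> Xset S" using v gverts_X by blast
    hence "v \<in> nz S" by (simp add: Xset_def)
    with \<open>v \<notin> mingens S\<close> obtain a b where ab: "a \<in> nz S" "b \<in> nz S" "v = a + b"
      unfolding mingens_def by blast
    have aS: "a \<in> S" "a \<noteq> 0" "b \<in> S" "b \<noteq> 0" using ab by (auto simp: nz_def)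
    have aX: "a \<in> Xset S" using ap_split[OF assms vX aS(1) aS(3) ab(3) aS(2)] .
    have bX: "b \<in> Xset S" using ap_split[OF assms vX aS(3) aS(1) _ aS(4)] ab(3) by simp
    have "{a, b} \<in> gedges S" using aX bX vX ab(3) unfolding gedges_def by blast
    hence av: "a \<in> gverts S" unfolding gverts_def by blast
    have "gdeg S v < gdeg S a"
      by (rule deg_strict[OF assms aX vX]) (use ab aS in auto)
    thus False using mx av by force
  qed
next
  fix r v1 v2 assume "(r::nat) \<ge> 1" and v1: "v1 \<in> gverts S" and v2: "v2 \<in> gverts S"
    and h: "gdeg S v1 = r \<and> gdeg S v2 = r \<and> v1 \<noteq> v2"
  show "\<not> (v1 \<le> v2 \<and> v2 - v1 \<in> S)"
  proof
    assume "v1 \<le> v2 \<and> v2 - v1 \<in> S"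
    hence "gdeg S v2 < gdeg S v1"
      using deg_strict[OF assms, of v1 v2] v1 v2 gverts_X h by blast
    thus False using h by simp
  qed
qed

end
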